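(* For every $\varepsilon\in(0,1]$ and $n\in\mathbb N$, \[ |\alpha(n,0)|\le\frac{\varepsilon^{-1}+4\sqrt2}{\pi}\cdot\frac{4+\varepsilon}{\varepsilon}\cdot\frac1N\Big(\frac N{N-\varepsilon}\Big)^{\max\{n-1,0\}},\qquad |\alpha(n,1)|\le\frac9\pi\cdot\frac{4+\varepsilon}{\varepsilon}\cdot\frac1N\Big(\frac N{N-\varepsilon}\Big)^{\max\{n-1,0\}}, \] \[ \sup_{q\in[-1,1]}\Big|\sum_{s=2}^\infty q^s\alpha(n,s)\Big|\le\frac1\pi\Big(\varepsilon^{-1}+\frac{16\sqrt2}{(1-\cos1)^{1/2}}\Big)\cdot\frac{4+\varepsilon}{\varepsilon}\cdot\frac1N\Big(\frac N{N-\varepsilon}\Big)^{\max\{n-2,0\}}. \]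
   Context: $E$ is a finite set with $N=\#E>8$ elements; $Q$ is an irreducible stochastic matrix on $E$ with $Q(x,y)=Q(y,x)$ for all $x,y$ and $\mathrm{tr}(Q)=0$. The function $\alpha:\mathbb Z_+\times\mathbb Z_+\to\mathbb R$ is defined by $\alpha(0,s)=0$ for all $s$ and, for $n\in\mathbb Z_+$, $\alpha(n+1,0)=\frac2{N^2}+\alpha(n,0)+\frac2{N^2}\sum_{s\ge1}\alpha(n,s)\mathrm{tr}(Q^s)$, $\alpha(n+1,1)=-\frac2{N^2}+\frac{N-2}N\alpha(n,1)-\frac2{N^2}\sum_{s\ge1}\alpha(n,s)\mathrm{tr}(Q^s)$, $\alpha(n+1,s)=\frac{N-2}N\alpha(n,s)+\frac2N\alpha(n,s-1)$ for $s\ge2$. *)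

theory Defs
  imports Complex_Main
begin

primrec mpow :: "'a set \<Rightarrow> ('a \<Rightarrow> 'a \<Rightarrow> real) \<Rightarrow> nat \<Rightarrow> 'a \<Rightarrow> 'a \<Rightarrow> real" where
  "mpow E Q 0 = (\<lambda>x y. if x = y then 1 else 0)"
| "mpow E Q (Suc k) = (\<lambda>x y. \<Sum>z\<in>E. Q x z * mpow E Q k z y)"

definition mtrace :: "'a set \<Rightarrow> ('a \<Rightarrow> 'a \<Rightarrow> real) \<Rightarrow> nat \<Rightarrow> real" where
  "mtrace E Q k = (\<Sum>x\<in>E. mpow E Q k x x)"

definition stochastic :: "'a set \<Rightarrow> ('a \<Rightarrow> 'a \<Rightarrow> real) \<Rightarrow> bool" where
  "stochastic E Q \<longleftrightarrow> (\<forall>x\<in>E. \<forall>y\<in>E. Q x y \<ge> 0) \<and> (\<forall>x\<in>E. (\<Sum>y\<in>E. Q x y) = 1)"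

definition irreducible_mat :: "'a set \<Rightarrow> ('a \<Rightarrow> 'a \<Rightarrow> real) \<Rightarrow> bool" where
  "irreducible_mat E Q \<longleftrightarrow> (\<forall>x\<in>E. \<forall>y\<in>E. \<exists>k. mpow E Q k x y > 0)"

text \<open>alpha n s, with the recursion of the paper; the sum over s \<ge> 1 is the series
  indexed by t = s - 1.\<close>
primrec alpha :: "'a set \<Rightarrow> ('a \<Rightarrow> 'a \<Rightarrow> real) \<Rightarrow> nat \<Rightarrow> nat \<Rightarrow> real" where
  "alpha E Q 0 = (\<lambda>s. 0)"
| "alpha E Q (Suc n) =
     (let N = real (card E);
          S = (\<Sum>t. alpha E Q n (Suc t) * mtrace E Q (Suc t))
      in (\<lambda>s. if s = 0 then 2 / N^2 + alpha E Q n 0 + 2 / N^2 * S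
              else if s = 1 then - 2 / N^2 + (N - 2) / N * alpha E Q n 1 - 2 / N^2 * S
              else (N - 2) / N * alpha E Q n s + 2 / N * alpha E Q n (s - 1)))"

end

theory Submission
  imports Defs "Jordan_Normal_Form.Schur_Decomposition"
begin


lemma pow_mat_Suc':
  assumes "A \<in> carrier_mat n n" shows "A ^\<^sub>m Suc k = A * A ^\<^sub>m k"
proof (induction k)
  case 0 then show ?case using assms by simp
next
  case (Suc k)
  have "A ^\<^sub>m Suc (Suc k) = A ^\<^sub>m Suc k * A" by simp
  also have "\<dots> = (A * A ^\<^sub>m k) * A" using Suc by simp
  also have "\<dots> = A * (A ^\<^sub>m k * A)" using assms by (intro assoc_mult_mat) auto
  also have "\<dots> = A * A ^\<^sub>m Suc k" by simp
  finally show ?case .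
qed

definition mtr :: "'b::comm_ring_1 mat \<Rightarrow> 'b" where "mtr M = (\<Sum>i<dim_row M. M $$ (i,i))"

lemma mtr_comm:
  assumes "A \<in> carrier_mat n m" "B \<in> carrier_mat m n"
  shows "mtr (A * B) = mtr (B * A)"
proof -
  have "mtr (A * B) = (\<Sum>i<n. \<Sum>k<m. A $$ (i,k) * B $$ (k,i))"
    using assms unfolding mtr_def by (simp add: scalar_prod_def atLeast0LessThan)
  also have "\<dots> = (\<Sum>k<m. \<Sum>i<n. B $$ (k,i) * A $$ (i,k))"
    by (subst sum.swap) (simp add: mult.commute)
  also have "\<dots> = mtr (B * A)"
    using assms unfolding mtr_def by (simp add: scalar_prod_def atLeast0LessThan)
  finally show ?thesis .
qed

lemma upper_pow:
  fixes B :: "'b::comm_ring_1 mat"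
  assumes B: "B \<in> carrier_mat n n" and ut: "upper_triangular B"
  shows "(\<forall>i<n. \<forall>j<i. (B ^\<^sub>m s) $$ (i,j) = 0) \<and> (\<forall>i<n. (B ^\<^sub>m s) $$ (i,i) = (B $$ (i,i)) ^ s)"
proof (induction s)
  case 0 then show ?case using B by auto
next
  case (Suc s)
  have Bz: "B $$ (k,j) = 0" if "k < n" "j < k" for k j using ut B that unfolding upper_triangular_def by auto
  have Pz: "(B ^\<^sub>m s) $$ (i,k) = 0" if "i < n" "k < i" for i k using Suc that by auto
  have entry: "(B ^\<^sub>m Suc s) $$ (i,j) = (\<Sum>k<n. (B ^\<^sub>m s) $$ (i,k) * B $$ (k,j))" if "i < n" "j < n" for i j
    using that B by (simp add: scalar_prod_def atLeast0LessThan)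
  have 1: "(B ^\<^sub>m Suc s) $$ (i,j) = 0" if "i < n" "j < i" for i j
  proof -
    have "(\<Sum>k<n. (B ^\<^sub>m s) $$ (i,k) * B $$ (k,j)) = 0"
    proof (rule sum.neutral, rule ballI)
      fix k assume k: "k \<in> {..<n}"
      show "(B ^\<^sub>m s) $$ (i,k) * B $$ (k,j) = 0"
      proof (cases "k < i")
        case True then show ?thesis using Pz that by simp
      next
        case False then have "j < k" using that by simp
        then show ?thesis using Bz k by simp
      qed
    qed
    then show ?thesis using entry that by simp
  qed
  have 2: "(B ^\<^sub>m Suc s) $$ (i,i) = (B $$ (i,i)) ^ Suc s" if "i < n" for i
  proof -
    have "(\<Sum>k<n. (B ^\<^sub>m s) $$ (i,k) * B $$ (k,i)) = (\<Sum>k<n. if k = i then (B ^\<^sub>m s) $$ (i,i) * B $$ (i,i) else 0)"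
    proof (rule sum.cong[OF refl])
      fix k assume k: "k \<in> {..<n}"
      show "(B ^\<^sub>m s) $$ (i,k) * B $$ (k,i) = (if k = i then (B ^\<^sub>m s) $$ (i,i) * B $$ (i,i) else 0)"
      proof (cases "k < i")
        case True then show ?thesis using Pz that by simp
      next
        case False then show ?thesis using Bz k by (cases "k = i") auto
      qed
    qed
    also have "\<dots> = (B ^\<^sub>m s) $$ (i,i) * B $$ (i,i)" using that by simp
    finally show ?thesis using entry[OF that that] Suc that by simp
  qed
  show ?case using 1 2 by blast
qed

lemma eig_props:
  fixes A :: "complex mat" and a :: "nat \<Rightarrow> nat \<Rightarrow> real"
  assumes A: "A \<in> carrier_mat n n"
    and Aa: "\<And>i j. i < n \<Longrightarrow> j < n \<Longrightarrow> A $$ (i,j) = complex_of_real (a i j)"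
    and sym: "\<And>i j. i < n \<Longrightarrow> j < n \<Longrightarrow> a i j = a j i"
    and nn: "\<And>i j. i < n \<Longrightarrow> j < n \<Longrightarrow> a i j \<ge> 0"
    and rows: "\<And>i. i < n \<Longrightarrow> (\<Sum>j<n. a i j) = 1"
    and ev: "eigenvector A v e"
  shows "Im e = 0 \<and> cmod e \<le> 1"
proof -
  from ev A have v: "v \<in> carrier_vec n" and v0: "v \<noteq> 0\<^sub>v n" and Av: "A *\<^sub>v v = e \<cdot>\<^sub>v v"
    unfolding eigenvector_def by auto
  have dv: "dim_vec v = n" using v by auto
  have Avi: "e * v $ i = (\<Sum>j<n. complex_of_real (a i j) * v $ j)" if "i < n" for i
  proof -
    have "(A *\<^sub>v v) $ i = e * v $ i" using Av that dv by simp
    moreover have "(A *\<^sub>v v) $ i = (\<Sum>j<n. A $$ (i,j) * v $ j)"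
      using that A dv by (simp add: scalar_prod_def atLeast0LessThan)
    ultimately show ?thesis using Aa that by simp
  qed
  obtain i0 where i0: "i0 < n" "v $ i0 \<noteq> 0"
    using v0 v by (metis eq_vecI index_zero_vec(1) index_zero_vec(2) carrier_vecD)
  define z where "z = (\<Sum>i<n. cnj (v $ i) * (e * v $ i))"
  have z1: "z = e * complex_of_real (\<Sum>i<n. (cmod (v $ i))^2)"
  proof -
    have "z = (\<Sum>i<n. e * complex_of_real ((cmod (v $ i))^2))"
      unfolding z_def by (intro sum.cong refl) (simp add: complex_norm_square[unfolded of_real_power, symmetric] mult.commute mult.left_commute)
    then show ?thesis by (simp add: sum_distrib_left)
  qed
  have z2: "z = (\<Sum>i<n. \<Sum>j<n. complex_of_real (a i j) * (cnj (v $ i) * v $ j))"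
    unfolding z_def using Avi by (simp add: sum_distrib_left algebra_simps)
  have "cnj z = (\<Sum>i<n. \<Sum>j<n. complex_of_real (a i j) * (v $ i * cnj (v $ j)))"
    unfolding z2 by (simp add: cnj_sum mult.commute)
  also have "\<dots> = (\<Sum>j<n. \<Sum>i<n. complex_of_real (a i j) * (v $ i * cnj (v $ j)))"
    by (rule sum.swap)
  also have "\<dots> = z" unfolding z2
    by (intro sum.cong refl) (simp add: sym mult.commute)
  finally have "cnj z = z" .
  then have Imz: "Im z = 0" by (metis complex_cnj_cancel_iff complex_cnj_zero_iff complex_eq_cancel_iff2 Im_complex_of_real cnj.sel(2) neg_equal_zero)
  have pos: "(\<Sum>i<n. (cmod (v $ i))^2) > 0"
  proof -
    have "(cmod (v $ i0))^2 > 0" using i0 by simp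
    moreover have "(\<Sum>i<n. (cmod (v $ i))^2) \<ge> (cmod (v $ i0))^2"
      using i0 by (intro member_le_sum) auto
    ultimately show ?thesis by linarith
  qed
  have "Im z = Im e * (\<Sum>i<n. (cmod (v $ i))^2)" unfolding z1 by simp
  then have ImE: "Im e = 0" using Imz pos by simp
  define m where "m = Max ((\<lambda>i. cmod (v $ i)) ` {..<n})"
  have fin: "finite ((\<lambda>i. cmod (v $ i)) ` {..<n})" "(\<lambda>i. cmod (v $ i)) ` {..<n} \<noteq> {}" using i0 by auto
  obtain k where k: "k < n" "cmod (v $ k) = m"
    using Max_in[OF fin] unfolding m_def by auto
  have mge: "cmod (v $ j) \<le> m" if "j < n" for j
    unfolding m_def using fin that by (intro Max_ge) auto
  have mpos: "m > 0" using mge[OF i0(1)] i0 by (smt (verit) zero_less_norm_iff)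
  have "cmod e * m = cmod (e * v $ k)" using k by (simp add: norm_mult)
  also have "\<dots> = cmod (\<Sum>j<n. complex_of_real (a k j) * v $ j)" using Avi k by simp
  also have "\<dots> \<le> (\<Sum>j<n. cmod (complex_of_real (a k j) * v $ j))" by (rule norm_sum)
  also have "\<dots> = (\<Sum>j<n. a k j * cmod (v $ j))" using nn k by (intro sum.cong refl) (simp add: norm_mult)
  also have "\<dots> \<le> (\<Sum>j<n. a k j * m)" using nn k mge by (intro sum_mono mult_left_mono) auto
  also have "\<dots> = m" using rows[OF k(1)] by (simp add: sum_distrib_right[symmetric])
  finally have "cmod e * m \<le> 1 * m" by simp
  then have "cmod e \<le> 1" using mpos by (simp only: mult_le_cancel_right)
  with ImE show ?thesis by simp
qed


lemma poly_root_list: "e \<in> set es \<Longrightarrow> poly (\<Prod>a\<leftarrow>es. [:- a, 1:]) e = (0::complex)"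
  by (induction es) auto

lemma spectral:
  assumes fin: "finite E" and st: "stochastic E Q" and sym: "\<forall>x\<in>E. \<forall>y\<in>E. Q x y = Q y x"
  shows "\<exists>lam::nat\<Rightarrow>real. (\<forall>i<card E. -1 \<le> lam i \<and> lam i \<le> 1) \<and> (\<forall>s. mtrace E Q s = (\<Sum>i<card E. lam i ^ s))"
proof -
  define n where "n = card E"
  obtain f where f: "bij_betw f {0..<n} E" using ex_bij_betw_nat_finite[OF fin] unfolding n_def by blast
  have fE: "f i \<in> E" if "i < n" for i using f that by (auto dest: bij_betw_apply)
  have finj: "f i = f j \<longleftrightarrow> i = j" if "i < n" "j < n" for i j
    using f that unfolding bij_betw_def inj_on_def by auto
  have reidx: "(\<Sum>k<n. g (f k)) = (\<Sum>z\<in>E. g z)" for g :: "'a \<Rightarrow> real"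
    using sum.reindex_bij_betw[OF f, of g] by (simp add: atLeast0LessThan)
  define A :: "complex mat" where "A = mat n n (\<lambda>(i,j). complex_of_real (Q (f i) (f j)))"
  define M :: "nat \<Rightarrow> complex mat" where "M s = mat n n (\<lambda>(i,j). complex_of_real (mpow E Q s (f i) (f j)))" for s
  have A: "A \<in> carrier_mat n n" unfolding A_def by simp
  have MSuc: "M (Suc s) = A * M s" for s
  proof (rule eq_matI)
    fix i j assume "i < dim_row (A * M s)" "j < dim_col (A * M s)"
    then have ij: "i < n" "j < n" unfolding A_def M_def by auto
    have "(A * M s) $$ (i,j) = (\<Sum>k<n. complex_of_real (Q (f i) (f k) * mpow E Q s (f k) (f j)))"
      using ij unfolding A_def M_def by (simp add: scalar_prod_def atLeast0LessThan)
    also have "\<dots> = complex_of_real (\<Sum>k<n. Q (f i) (f k) * mpow E Q s (f k) (f j))" by simp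
    also have "(\<Sum>k<n. Q (f i) (f k) * mpow E Q s (f k) (f j)) = (\<Sum>z\<in>E. Q (f i) z * mpow E Q s z (f j))"
      by (rule reidx)
    finally show "M (Suc s) $$ (i,j) = (A * M s) $$ (i,j)" using ij unfolding M_def by simp
  qed (auto simp: A_def M_def)
  have pow: "A ^\<^sub>m s = M s" for s
  proof (induction s)
    case 0 show ?case unfolding M_def A_def by (rule eq_matI) (auto simp: finj)
  next
    case (Suc s) show ?case by (simp only: pow_mat_Suc'[OF A] Suc MSuc)
  qed
  have trM: "mtr (M s) = complex_of_real (mtrace E Q s)" for s
  proof -
    have "mtr (M s) = (\<Sum>i<n. complex_of_real (mpow E Q s (f i) (f i)))" unfolding mtr_def M_def by simp
    also have "\<dots> = complex_of_real (\<Sum>i<n. mpow E Q s (f i) (f i))" by simp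
    also have "(\<Sum>i<n. mpow E Q s (f i) (f i)) = mtrace E Q s" unfolding mtrace_def by (rule reidx)
    finally show ?thesis .
  qed
  obtain es where cp: "char_poly A = (\<Prod>a\<leftarrow>es. [:- a, 1:])" and les: "length es = n"
    using char_poly_factorized[OF A] by blast
  obtain B P P' where sch: "schur_decomposition A es = (B, P, P')" by (cases "schur_decomposition A es") auto
  from schur_decomposition[OF A cp sch]
  have sw: "similar_mat_wit A B P P'" and ut: "upper_triangular B" and dg: "diag_mat B = es" by auto
  from sw A have B: "B \<in> carrier_mat n n" and P: "P \<in> carrier_mat n n" and P': "P' \<in> carrier_mat n n"
    and PP: "P' * P = 1\<^sub>m n"
    unfolding similar_mat_wit_def Let_def by auto
  have esi: "es ! i = B $$ (i,i)" if "i < n" for i using dg that B unfolding diag_mat_def by auto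
  have trA: "mtr (A ^\<^sub>m s) = (\<Sum>i<n. (es ! i) ^ s)" for s
  proof -
    have Bs: "B ^\<^sub>m s \<in> carrier_mat n n" using B by simp
    have "A ^\<^sub>m s = P * B ^\<^sub>m s * P'" by (rule similar_mat_wit_pow_id[OF sw])
    then have "mtr (A ^\<^sub>m s) = mtr ((P * B ^\<^sub>m s) * P')" by simp
    also have "\<dots> = mtr (P' * (P * B ^\<^sub>m s))" using P P' Bs by (intro mtr_comm) auto
    also have "P' * (P * B ^\<^sub>m s) = (P' * P) * B ^\<^sub>m s" using P P' Bs by (simp add: assoc_mult_mat)
    also have "\<dots> = B ^\<^sub>m s" using PP Bs by (simp add: left_mult_one_mat)
    also have "mtr (B ^\<^sub>m s) = (\<Sum>i<n. (B $$ (i,i)) ^ s)"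
      unfolding mtr_def using upper_pow[OF B ut, of s] B by simp
    also have "\<dots> = (\<Sum>i<n. (es ! i) ^ s)" using esi by simp
    finally show ?thesis .
  qed
  have eprops: "Im (es ! i) = 0 \<and> cmod (es ! i) \<le> 1" if i: "i < n" for i
  proof -
    have "es ! i \<in> set es" using i les by simp
    then have "poly (char_poly A) (es ! i) = 0" unfolding cp by (rule poly_root_list)
    then have "eigenvalue A (es ! i)" using eigenvalue_root_char_poly[OF A] by simp
    from find_eigenvector[OF A this]
    have ev: "eigenvector A (find_eigenvector A (es ! i)) (es ! i)" .
    show ?thesis
    proof (rule eig_props[OF A _ _ _ _ ev, of "\<lambda>i j. Q (f i) (f j)"])
      show "\<And>i j. i < n \<Longrightarrow> j < n \<Longrightarrow> A $$ (i, j) = complex_of_real (Q (f i) (f j))"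
        unfolding A_def by simp
      show "\<And>i j. i < n \<Longrightarrow> j < n \<Longrightarrow> Q (f i) (f j) = Q (f j) (f i)" using sym fE by blast
      show "\<And>i j. i < n \<Longrightarrow> j < n \<Longrightarrow> Q (f i) (f j) \<ge> 0" using st fE unfolding stochastic_def by blast
      show "\<And>i. i < n \<Longrightarrow> (\<Sum>j<n. Q (f i) (f j)) = 1"
        using st fE reidx unfolding stochastic_def by simp
    qed
  qed
  define lam where "lam i = Re (es ! i)" for i
  have esl: "es ! i = complex_of_real (lam i)" if "i < n" for i
    using eprops[OF that] unfolding lam_def by (simp add: complex_eq_iff)
  have "\<forall>i<card E. -1 \<le> lam i \<and> lam i \<le> 1"
  proof (intro allI impI)
    fix i assume "i < card E"
    then have "i < n" unfolding n_def .
    then have "\<bar>lam i\<bar> \<le> 1" using eprops[of i] abs_Re_le_cmod[of "es ! i"] unfolding lam_def by linarith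
    then show "-1 \<le> lam i \<and> lam i \<le> 1" by linarith
  qed
  moreover have "\<forall>s. mtrace E Q s = (\<Sum>i<card E. lam i ^ s)"
  proof
    fix s
    have "complex_of_real (mtrace E Q s) = (\<Sum>i<n. (es ! i) ^ s)" using trM[of s] pow[of s] trA[of s] by simp
    also have "\<dots> = complex_of_real (\<Sum>i<n. lam i ^ s)" using esl by simp
    finally show "mtrace E Q s = (\<Sum>i<card E. lam i ^ s)" unfolding n_def of_real_eq_iff .
  qed
  ultimately show ?thesis by blast
qed



lemma alpha_zero: "n < s \<Longrightarrow> alpha E Q n s = 0"
proof (induction n arbitrary: s)
  case 0 then show ?case by simp
next
  case (Suc n)
  then have "s \<noteq> 0" "s \<noteq> 1" "n < s" "n < s - 1" by auto
  then show ?case using Suc.IH by (simp add: Let_def)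
qed

lemma mpow_nonneg:
  assumes "\<forall>x\<in>E. \<forall>y\<in>E. Q x y \<ge> 0" "x \<in> E" "y \<in> E"
  shows "mpow E Q k x y \<ge> 0"
  using assms(2,3)
proof (induction k arbitrary: x)
  case 0 then show ?case by simp
next
  case (Suc k) then show ?case using assms(1) by (auto intro!: sum_nonneg mult_nonneg_nonneg)
qed

lemma mtrace_nonneg:
  assumes "\<forall>x\<in>E. \<forall>y\<in>E. Q x y \<ge> 0"
  shows "mtrace E Q k \<ge> 0"
  unfolding mtrace_def using mpow_nonneg[OF assms] by (auto intro!: sum_nonneg)

lemma mtrace_1: assumes "finite E" shows "mtrace E Q 1 = (\<Sum>x\<in>E. Q x x)"
proof -
  have "\<And>x. x \<in> E \<Longrightarrow> (\<Sum>z\<in>E. Q x z * (if z = x then 1 else 0)) = Q x x"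
    using assms by (simp add: if_distrib sum.delta cong: if_cong)
  then show ?thesis unfolding mtrace_def by simp
qed

locale L4 =
  fixes E :: "'a set" and Q :: "'a \<Rightarrow> 'a \<Rightarrow> real" and lam :: "nat \<Rightarrow> real"
  assumes fin: "finite E" and cardE: "card E > 8" and stoch: "stochastic E Q"
    and tr0: "(\<Sum>x\<in>E. Q x x) = 0"
    and lam_bd: "\<And>i. i < card E \<Longrightarrow> -1 \<le> lam i \<and> lam i \<le> 1"
    and lam_tr: "\<And>s. mtrace E Q s = (\<Sum>i<card E. lam i ^ s)"
begin

definition "NN = real (card E)"
definition "pp = 2 / NN"
definition "qq = 2 / NN^2"
definition "S n = (\<Sum>t. alpha E Q n (Suc t) * mtrace E Q (Suc t))"
definition "cc n = 1 + S n"

primrec D :: "nat \<Rightarrow> real \<Rightarrow> real" where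
  "D 0 t = 0"
| "D (Suc n) t = (1 - pp + pp * t) * D n t + qq * cc n"

lemma NN_gt: "NN > 8" using cardE unfolding NN_def by simp
lemma NN_pos: "NN > 0" using NN_gt by simp
lemma pp_qq: "qq = pp / NN" unfolding pp_def qq_def by (simp add: power2_eq_square)
lemma pp_pos: "pp > 0" unfolding pp_def using NN_pos by simp
lemma qq_pos: "qq > 0" unfolding qq_def using NN_pos by simp
lemma qc_le: "qq * cc n \<le> qq" if "cc n \<le> 1" using that qq_pos by (simp add: mult_left_le)
lemma pp_le: "pp \<le> 1/4" unfolding pp_def using NN_gt by (simp add: field_simps)

lemma S_fin: "S n = (\<Sum>t<n. alpha E Q n (Suc t) * mtrace E Q (Suc t))"
  unfolding S_def by (rule suminf_finite) (auto simp: alpha_zero)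

lemma alpha_Suc_unf: "alpha E Q (Suc n) s = (if s = 0 then 2 / NN^2 + alpha E Q n 0 + 2 / NN^2 * S n
              else if s = 1 then - 2 / NN^2 + (NN - 2) / NN * alpha E Q n 1 - 2 / NN^2 * S n
              else (NN - 2) / NN * alpha E Q n s + 2 / NN * alpha E Q n (s - 1))"
  by (simp only: alpha.simps Let_def S_def NN_def)

declare alpha.simps(2)[simp del]

lemma rec0: "alpha E Q (Suc n) 0 = alpha E Q n 0 + qq * cc n"
  unfolding alpha_Suc_unf by (simp add: cc_def qq_def algebra_simps add_divide_distrib)

lemma rec1: "alpha E Q (Suc n) 1 = (1 - pp) * alpha E Q n 1 - qq * cc n"
  unfolding alpha_Suc_unf using NN_pos by (simp add: cc_def qq_def pp_def field_simps)

lemma recs: "2 \<le> s \<Longrightarrow> alpha E Q (Suc n) s = (1 - pp) * alpha E Q n s + pp * alpha E Q n (s - 1)"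
  unfolding alpha_Suc_unf using NN_pos by (simp add: pp_def field_simps)

lemma Bsum: "n \<le> K \<Longrightarrow> (\<Sum>s<K. alpha E Q n (Suc s) * t ^ Suc s) = - t * D n t"
proof (induction n arbitrary: K)
  case 0 then show ?case by simp
next
  case (Suc n)
  then obtain K' where K: "K = Suc K'" and nK: "n \<le> K'" by (cases K) auto
  have IH1: "(\<Sum>s<Suc K'. alpha E Q n (Suc s) * t ^ Suc s) = - t * D n t" using Suc.IH[of "Suc K'"] nK by simp
  have IH2: "(\<Sum>s<K'. alpha E Q n (Suc s) * t ^ Suc s) = - t * D n t" using Suc.IH[of "K'"] nK by simp
  have e1: "(\<Sum>s<Suc K'. alpha E Q n (Suc s) * t ^ Suc s)
      = alpha E Q n 1 * t + (\<Sum>s<K'. alpha E Q n (Suc (Suc s)) * t ^ Suc (Suc s))"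
    by (subst sum.lessThan_Suc_shift) simp
  have "(\<Sum>s<K. alpha E Q (Suc n) (Suc s) * t ^ Suc s)
      = alpha E Q (Suc n) 1 * t + (\<Sum>s<K'. alpha E Q (Suc n) (Suc (Suc s)) * t ^ Suc (Suc s))"
    unfolding K by (subst sum.lessThan_Suc_shift) simp
  also have "(\<Sum>s<K'. alpha E Q (Suc n) (Suc (Suc s)) * t ^ Suc (Suc s))
     = (1 - pp) * (\<Sum>s<K'. alpha E Q n (Suc (Suc s)) * t ^ Suc (Suc s))
       + pp * t * (\<Sum>s<K'. alpha E Q n (Suc s) * t ^ Suc s)"
  proof -
    have "(\<Sum>s<K'. alpha E Q (Suc n) (Suc (Suc s)) * t ^ Suc (Suc s))
        = (\<Sum>s<K'. (1 - pp) * (alpha E Q n (Suc (Suc s)) * t ^ Suc (Suc s))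
              + pp * t * (alpha E Q n (Suc s) * t ^ Suc s))"
      by (rule sum.cong) (simp_all add: recs algebra_simps)
    then show ?thesis by (simp add: sum.distrib sum_distrib_left)
  qed
  also have "(\<Sum>s<K'. alpha E Q n (Suc (Suc s)) * t ^ Suc (Suc s)) = - t * D n t - alpha E Q n 1 * t"
    using e1 IH1 by simp
  finally have "(\<Sum>s<K. alpha E Q (Suc n) (Suc s) * t ^ Suc s) =
     alpha E Q (Suc n) 1 * t + ((1 - pp) * (- t * D n t - alpha E Q n 1 * t) + pp * t * (- t * D n t))"
    using IH2 by simp
  then show ?case unfolding rec1 D.simps by (simp add: algebra_simps)
qed

lemma S_lam: "S n = - (\<Sum>i<card E. lam i * D n (lam i))"
proof -
  have "S n = (\<Sum>t<n. \<Sum>i<card E. alpha E Q n (Suc t) * lam i ^ Suc t)"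
    unfolding S_fin lam_tr by (simp add: sum_distrib_left)
  also have "\<dots> = (\<Sum>i<card E. \<Sum>t<n. alpha E Q n (Suc t) * lam i ^ Suc t)"
    by (rule sum.swap)
  also have "\<dots> = (\<Sum>i<card E. - lam i * D n (lam i))"
    by (intro sum.cong refl Bsum) simp
  finally show ?thesis by (simp add: sum_negf)
qed

lemma sum_lam: "(\<Sum>i<card E. lam i) = 0"
  using lam_tr[of 1] mtrace_1[OF fin] tr0 by simp

lemma sum_one_minus: "(\<Sum>i<card E. 1 - lam i) = NN"
  by (simp add: sum_subtractf sum_lam NN_def)

lemma cc_step: "cc (Suc n) - cc n = (\<Sum>i<card E. lam i * pp * (1 - lam i) * D n (lam i))"
proof -
  have "cc (Suc n) - cc n = (\<Sum>i<card E. lam i * (D n (lam i) - D (Suc n) (lam i)))"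
    unfolding cc_def S_lam by (simp add: sum_subtractf[symmetric] right_diff_distrib del: D.simps)
  also have "\<dots> = (\<Sum>i<card E. lam i * pp * (1 - lam i) * D n (lam i) - qq * cc n * lam i)"
    by (rule sum.cong) (auto simp: algebra_simps)
  also have "\<dots> = (\<Sum>i<card E. lam i * pp * (1 - lam i) * D n (lam i))"
    by (simp add: sum_subtractf sum_distrib_left[symmetric] sum_lam)
  finally show ?thesis .
qed

definition "Inv n \<longleftrightarrow> cc n \<ge> 0 \<and> (\<forall>t. -1 \<le> t \<and> t \<le> 1 \<longrightarrow> D n t \<ge> 0)
   \<and> (\<forall>t. -1 \<le> t \<and> t \<le> 0 \<longrightarrow> - t * D n t \<le> cc n / NN)"

lemma term_bound:
  assumes I: "Inv n" and t: "-1 \<le> t" "t \<le> 1"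
  shows "t * pp * (1 - t) * D n t \<ge> - (pp / NN) * (1 - t) * cc n"
proof (cases "t \<ge> 0")
  case True
  have "t * pp * (1 - t) * D n t \<ge> 0" using I t True pp_pos unfolding Inv_def
    by (intro mult_nonneg_nonneg) auto
  moreover have "(pp / NN) * (1 - t) * cc n \<ge> 0" using I t pp_pos NN_pos unfolding Inv_def
    by (intro mult_nonneg_nonneg) auto
  ultimately show ?thesis by linarith
next
  case False
  then have h: "- t * D n t \<le> cc n / NN" using I t unfolding Inv_def by auto
  have "pp * (1 - t) \<ge> 0" using pp_pos t by simp
  from mult_left_mono[OF h this]
  show ?thesis by (simp add: algebra_simps)
qed

lemma cc_lower: assumes "Inv n" shows "cc (Suc n) \<ge> (1 - pp) * cc n"
proof -
  have "(\<Sum>i<card E. lam i * pp * (1 - lam i) * D n (lam i)) \<ge> (\<Sum>i<card E. - (pp / NN) * (1 - lam i) * cc n)"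
    using term_bound[OF assms] lam_bd by (intro sum_mono) auto
  also have "(\<Sum>i<card E. - (pp / NN) * (1 - lam i) * cc n) = (- (pp / NN) * cc n) * (\<Sum>i<card E. 1 - lam i)"
    unfolding sum_distrib_left by (rule sum.cong) (simp_all add: algebra_simps)
  also have "\<dots> = - (pp / NN) * cc n * NN" by (simp add: sum_one_minus)
  finally show ?thesis using cc_step[of n] NN_pos by (simp add: algebra_simps)
qed

lemma Inv_all: "Inv n"
proof (induction n)
  case 0
  have "cc 0 = 1" unfolding cc_def S_fin by simp
  then show ?case unfolding Inv_def using NN_pos by simp
next
  case (Suc n)
  have cl: "cc (Suc n) \<ge> (1 - pp) * cc n" by (rule cc_lower[OF Suc])
  have c0: "cc n \<ge> 0" using Suc unfolding Inv_def by auto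
  have "(1 - pp) * cc n \<ge> 0" using c0 pp_le by simp
  then have c1: "cc (Suc n) \<ge> 0" using cl by linarith
  have D1: "D (Suc n) t \<ge> 0" if "-1 \<le> t" "t \<le> 1" for t
  proof -
    have "pp * t \<ge> pp * (-1)" using that pp_pos by (intro mult_left_mono) auto
    then have "1 - pp + pp * t \<ge> 0" using pp_le by linarith
    moreover have "D n t \<ge> 0" using Suc that unfolding Inv_def by auto
    moreover have "qq * cc n \<ge> 0" using c0 pp_qq pp_pos NN_pos by simp
    ultimately show ?thesis by simp
  qed
  have D2: "- t * D (Suc n) t \<le> cc (Suc n) / NN" if "-1 \<le> t" "t \<le> 0" for t
  proof -
    have "pp * t \<ge> pp * (-1)" using that pp_pos by (intro mult_left_mono) auto
    then have m: "1 - pp + pp * t \<ge> 0" using pp_le by linarith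
    have h: "- t * D n t \<le> cc n / NN" using Suc that unfolding Inv_def by auto
    have "- t * D (Suc n) t = (1 - pp + pp * t) * (- t * D n t) + (- t) * qq * cc n"
      by (simp add: algebra_simps)
    also have "\<dots> \<le> (1 - pp + pp * t) * (cc n / NN) + (- t) * qq * cc n"
      using mult_left_mono[OF h m] by simp
    also have "\<dots> = (1 - pp) * cc n / NN"
      using NN_pos by (simp add: pp_qq field_simps)
    also have "\<dots> \<le> cc (Suc n) / NN" using cl NN_pos by (simp add: divide_right_mono)
    finally show ?thesis .
  qed
  show ?case unfolding Inv_def using c1 D1 D2 by auto
qed


lemma cc_nonneg: "cc n \<ge> 0" using Inv_all unfolding Inv_def by auto

lemma D_nonneg: "-1 \<le> t \<Longrightarrow> t \<le> 1 \<Longrightarrow> D n t \<ge> 0" using Inv_all unfolding Inv_def by auto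

lemma Q_nonneg: "\<forall>x\<in>E. \<forall>y\<in>E. Q x y \<ge> 0" using stoch unfolding stochastic_def by auto

lemma G_nonneg: "(\<Sum>i<card E. lam i * (1 - pp + pp * lam i) ^ m) \<ge> 0"
proof -
  have "(\<Sum>i<card E. lam i * (1 - pp + pp * lam i) ^ m)
      = (\<Sum>i<card E. lam i * (\<Sum>k\<le>m. of_nat (m choose k) * (pp * lam i) ^ k * (1 - pp) ^ (m - k)))"
  proof (rule sum.cong[OF refl])
    fix i
    have "1 - pp + pp * lam i = pp * lam i + (1 - pp)" by simp
    then show "lam i * (1 - pp + pp * lam i) ^ m =
      lam i * (\<Sum>k\<le>m. of_nat (m choose k) * (pp * lam i) ^ k * (1 - pp) ^ (m - k))"
      by (simp only: binomial_ring)
  qed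
  also have "\<dots> = (\<Sum>i<card E. \<Sum>k\<le>m. of_nat (m choose k) * pp ^ k * (1 - pp) ^ (m - k) * lam i ^ Suc k)"
    by (simp add: sum_distrib_left power_mult_distrib algebra_simps)
  also have "\<dots> = (\<Sum>k\<le>m. \<Sum>i<card E. of_nat (m choose k) * pp ^ k * (1 - pp) ^ (m - k) * lam i ^ Suc k)"
    by (rule sum.swap)
  also have "\<dots> = (\<Sum>k\<le>m. of_nat (m choose k) * pp ^ k * (1 - pp) ^ (m - k) * mtrace E Q (Suc k))"
    by (simp add: lam_tr sum_distrib_left)
  also have "\<dots> \<ge> 0"
    using mtrace_nonneg[OF Q_nonneg] pp_pos pp_le by (intro sum_nonneg mult_nonneg_nonneg) auto
  finally show ?thesis .
qed

lemma H_nonneg: "(\<Sum>i<card E. lam i * (1 - pp + pp * lam i) ^ m * D n (lam i)) \<ge> 0"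
proof (induction n arbitrary: m)
  case 0 then show ?case by simp
next
  case (Suc n)
  have "(\<Sum>i<card E. lam i * (1 - pp + pp * lam i) ^ m * D (Suc n) (lam i))
      = (\<Sum>i<card E. lam i * (1 - pp + pp * lam i) ^ Suc m * D n (lam i)
          + qq * cc n * (lam i * (1 - pp + pp * lam i) ^ m))"
    by (rule sum.cong) (simp_all add: algebra_simps)
  also have "\<dots> = (\<Sum>i<card E. lam i * (1 - pp + pp * lam i) ^ Suc m * D n (lam i))
        + qq * cc n * (\<Sum>i<card E. lam i * (1 - pp + pp * lam i) ^ m)"
    by (simp add: sum.distrib sum_distrib_left)
  also have "\<dots> \<ge> 0" using Suc.IH[of "Suc m"] G_nonneg[of m] cc_nonneg[of n] pp_qq pp_pos NN_pos
    by (intro add_nonneg_nonneg mult_nonneg_nonneg) auto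
  finally show ?case .
qed

lemma cc_le1: "cc n \<le> 1"
  using H_nonneg[of 0 n] unfolding cc_def S_lam by simp

lemma alpha0_bd: "0 \<le> alpha E Q n 0 \<and> alpha E Q n 0 \<le> qq * n"
proof (induction n)
  case 0 then show ?case by simp
next
  case (Suc n)
  have "0 \<le> qq * cc n" "qq * cc n \<le> qq" using cc_nonneg[of n] cc_le1[of n] qc_le qq_pos by auto
  then show ?case using Suc by (simp add: rec0 algebra_simps)
qed

lemma alpha1_bd: "- 1 / NN \<le> alpha E Q n 1 \<and> alpha E Q n 1 \<le> 0"
proof (induction n)
  case 0 then show ?case using NN_pos by simp
next
  case (Suc n)
  have q0: "0 \<le> qq * cc n" "qq * cc n \<le> qq" using cc_nonneg[of n] cc_le1[of n] qc_le qq_pos by auto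
  have p1: "1 - pp \<ge> 0" using pp_le by simp
  have "(1 - pp) * alpha E Q n 1 \<le> 0" using Suc p1 by (simp add: mult_nonneg_nonpos)
  moreover have "(1 - pp) * alpha E Q n 1 \<ge> (1 - pp) * (- 1 / NN)" using Suc p1 by (intro mult_left_mono) auto
  moreover have "(1 - pp) * (- 1 / NN) - qq = - 1 / NN" using NN_pos by (simp add: pp_qq field_simps)
  ultimately show ?case using q0 rec1[of n] by linarith
qed

lemma D_le: "-1 \<le> t \<Longrightarrow> t \<le> 1 \<Longrightarrow> D n t \<le> qq * n"
proof (induction n)
  case 0 then show ?case by simp
next
  case (Suc n)
  have "pp * t \<ge> pp * (-1)" using Suc.prems pp_pos by (intro mult_left_mono) auto
  then have m0: "1 - pp + pp * t \<ge> 0" using pp_le by linarith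
  have "pp * t \<le> pp * 1" using Suc.prems pp_pos by (intro mult_left_mono) auto
  then have m1: "1 - pp + pp * t \<le> 1" by simp
  have d0: "D n t \<ge> 0" using D_nonneg Suc.prems by auto
  have "(1 - pp + pp * t) * D n t \<le> 1 * D n t" using m1 d0 by (intro mult_right_mono) auto
  also have "\<dots> \<le> qq * n" using Suc by auto
  finally have "(1 - pp + pp * t) * D n t \<le> qq * n" .
  moreover have "qq * cc n \<le> qq" using cc_le1[of n] qc_le by auto
  ultimately show ?case by (simp add: algebra_simps)
qed

lemma tail_eq: "(\<Sum>t. x ^ (t + 2) * alpha E Q n (t + 2)) = - x * D n x - alpha E Q n 1 * x"
proof -
  have "(\<Sum>t. x ^ (t + 2) * alpha E Q n (t + 2)) = (\<Sum>t<n. x ^ (t + 2) * alpha E Q n (t + 2))"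
    by (rule suminf_finite) (auto simp: alpha_zero)
  moreover have "(\<Sum>s<Suc n. alpha E Q n (Suc s) * x ^ Suc s)
      = alpha E Q n 1 * x + (\<Sum>s<n. alpha E Q n (Suc (Suc s)) * x ^ Suc (Suc s))"
    by (subst sum.lessThan_Suc_shift) simp
  moreover have "(\<Sum>s<Suc n. alpha E Q n (Suc s) * x ^ Suc s) = - x * D n x" by (rule Bsum) simp
  moreover have "(\<Sum>s<n. alpha E Q n (Suc (Suc s)) * x ^ Suc (Suc s)) = (\<Sum>t<n. x ^ (t + 2) * alpha E Q n (t + 2))"
    by (simp add: mult.commute)
  ultimately show ?thesis by simp
qed

lemma tail_bd: assumes "-1 \<le> x" "x \<le> 1"
  shows "\<bar>\<Sum>t. x ^ (t + 2) * alpha E Q n (t + 2)\<bar> \<le> qq * n + 1 / NN"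
proof -
  have ax: "\<bar>x\<bar> \<le> 1" using assms by auto
  have "\<bar>- x * D n x - alpha E Q n 1 * x\<bar> \<le> \<bar>x\<bar> * \<bar>D n x\<bar> + \<bar>alpha E Q n 1\<bar> * \<bar>x\<bar>"
    by (simp add: abs_mult abs_triangle_ineq4 order_trans[OF abs_triangle_ineq4])
  also have "\<dots> \<le> 1 * (qq * n) + (1 / NN) * 1"
    using D_nonneg[OF assms, of n] D_le[OF assms, of n] alpha1_bd[of n] ax NN_pos
    by (intro add_mono mult_mono) auto
  finally show ?thesis unfolding tail_eq by simp
qed

end


lemma K_bound:
  fixes a e :: real
  assumes "a \<ge> 0" "0 < e" "e \<le> 1"
  shows "a / pi * ((4 + e) / e) * e \<ge> a" "a / pi * ((4 + e) / e) \<ge> a"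
proof -
  have "(4 + e) / pi \<ge> 1" using pi_less_4 assms by (simp add: field_simps)
  then have "a * ((4 + e) / pi) \<ge> a * 1" using assms by (intro mult_left_mono) auto
  moreover have "a / pi * ((4 + e) / e) * e = a * ((4 + e) / pi)" using assms by (simp add: field_simps)
  ultimately show 1: "a / pi * ((4 + e) / e) * e \<ge> a" by simp
  have "a / pi * ((4 + e) / e) \<ge> 0" using assms by simp
  then have "a / pi * ((4 + e) / e) * e \<le> a / pi * ((4 + e) / e)" using assms by (intro mult_left_le) auto
  then show "a / pi * ((4 + e) / e) \<ge> a" using 1 by linarith
qed

lemma bern:
  fixes Nr e :: real and k :: nat
  assumes "Nr > 8" "0 < e" "e \<le> 1"
  shows "(Nr / (Nr - e)) ^ k \<ge> 1 + real k * e / Nr"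
proof -
  have "Nr / (Nr - e) = 1 + e / (Nr - e)" using assms by (simp add: field_simps)
  moreover have "1 + real k * (e / (Nr - e)) \<le> (1 + e / (Nr - e)) ^ k"
    using assms by (intro Bernoulli_inequality) (simp add: field_simps)
  moreover have "real k * e / Nr \<le> real k * (e / (Nr - e))"
  proof -
    have "e / Nr \<le> e / (Nr - e)" using assms by (intro divide_left_mono) auto
    then have "real k * (e / Nr) \<le> real k * (e / (Nr - e))" by (intro mult_left_mono) auto
    then show ?thesis by simp
  qed
  ultimately show ?thesis by simp
qed

lemma num_main:
  fixes Nr K e rk A B :: real and k :: nat
  assumes "Nr > 8" "0 < e" "K \<ge> A" "K * e \<ge> B" "A \<ge> 0" "B \<ge> 0"
    and "rk \<ge> 1 + real k * e / Nr"
  shows "K * (1 / Nr) * rk \<ge> (A * Nr + B * real k) / Nr^2"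
proof -
  have K0: "K \<ge> 0" using assms by linarith
  have "K * (1 / Nr) * rk \<ge> K * (1 / Nr) * (1 + real k * e / Nr)"
    using assms K0 by (intro mult_left_mono) auto
  also have "K * (1 / Nr) * (1 + real k * e / Nr) = (K * Nr + (K * e) * real k) / Nr^2"
    using assms by (simp add: field_simps power2_eq_square)
  finally have 1: "K * (1 / Nr) * rk \<ge> (K * Nr + (K * e) * real k) / Nr^2" .
  have "(K * Nr + (K * e) * real k) \<ge> A * Nr + B * real k"
    using assms by (intro add_mono mult_right_mono) auto
  then have "(K * Nr + (K * e) * real k) / Nr^2 \<ge> (A * Nr + B * real k) / Nr^2"
    by (simp add: divide_right_mono)
  with 1 show ?thesis by linarith
qed

theorem lemma4p5:
  fixes E :: "'a set" and Q :: "'a \<Rightarrow> 'a \<Rightarrow> real" and \<epsilon> :: real and n :: nat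
  assumes "finite E" and "card E > 8"
    and "stochastic E Q" and "irreducible_mat E Q"
    and "\<forall>x\<in>E. \<forall>y\<in>E. Q x y = Q y x"
    and "(\<Sum>x\<in>E. Q x x) = 0"
    and "0 < \<epsilon>" and "\<epsilon> \<le> 1"
  shows "\<bar>alpha E Q n 0\<bar> \<le> (1 / \<epsilon> + 4 * sqrt 2) / pi * ((4 + \<epsilon>) / \<epsilon>) * (1 / real (card E))
            * (real (card E) / (real (card E) - \<epsilon>)) ^ (n - 1) \<and>
         \<bar>alpha E Q n 1\<bar> \<le> 9 / pi * ((4 + \<epsilon>) / \<epsilon>) * (1 / real (card E))
            * (real (card E) / (real (card E) - \<epsilon>)) ^ (n - 1) \<and>
         (\<forall>q\<in>{-1..1::real}. \<bar>\<Sum>t. q ^ (t + 2) * alpha E Q n (t + 2)\<bar>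
           \<le> 1 / pi * (1 / \<epsilon> + 16 * sqrt 2 / sqrt (1 - cos 1)) * ((4 + \<epsilon>) / \<epsilon>)
             * (1 / real (card E)) * (real (card E) / (real (card E) - \<epsilon>)) ^ (n - 2))"
proof -
  obtain lam where lam: "\<forall>i<card E. -1 \<le> lam i \<and> lam i \<le> 1" "\<forall>s. mtrace E Q s = (\<Sum>i<card E. lam i ^ s)"
    using spectral[OF assms(1,3,5)] by blast
  interpret L: L4 E Q lam
    using assms lam by unfold_locales auto
  define Nr where "Nr = real (card E)"
  define r where "r = Nr / (Nr - \<epsilon>)"
  have Nr8: "Nr > 8" using assms(2) unfolding Nr_def by simp
  have NN: "L.NN = Nr" unfolding L.NN_def Nr_def ..
  have qq: "L.qq = 2 / Nr^2" unfolding L.qq_def NN ..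
  have r1: "r ^ k \<ge> 1" for k
  proof -
    have "r \<ge> 1" unfolding r_def using Nr8 assms(7,8) by (simp add: field_simps)
    then show ?thesis by (simp add: one_le_power)
  qed
  have rb: "r ^ k \<ge> 1 + real k * \<epsilon> / Nr" for k unfolding r_def by (rule bern[OF Nr8 assms(7,8)])
  have s2: "sqrt 2 \<ge> 1" by simp
  define K0 where "K0 = (1 / \<epsilon> + 4 * sqrt 2) / pi * ((4 + \<epsilon>) / \<epsilon>)"
  have a0: "1 / \<epsilon> + 4 * sqrt 2 \<ge> 4" using s2 assms(7) by (smt (verit) divide_pos_pos)
  have "K0 \<ge> 1 / \<epsilon> + 4 * sqrt 2" "K0 * \<epsilon> \<ge> 1 / \<epsilon> + 4 * sqrt 2"
    unfolding K0_def using a0 assms(7,8) by (intro K_bound; simp)+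
  then have K0a: "K0 \<ge> 2" "K0 * \<epsilon> \<ge> 2" using a0 by linarith+
  define K1 where "K1 = 9 / pi * ((4 + \<epsilon>) / \<epsilon>)"
  have "K1 \<ge> 9" unfolding K1_def using assms(7,8) by (intro K_bound) simp_all
  then have K1a: "K1 \<ge> 1" by simp
  define b where "b = 1 / \<epsilon> + 16 * sqrt 2 / sqrt (1 - cos 1)"
  have c1: "cos (1::real) < 1" using cos_monotone_0_pi[of 0 1] pi_ge_two by simp
  have c0: "cos (1::real) \<ge> 0" using cos_ge_zero[of 1] pi_ge_two by simp
  have sc: "0 < sqrt (1 - cos (1::real))" "sqrt (1 - cos (1::real)) \<le> 1" using c1 c0 by auto
  have "16 * sqrt 2 / sqrt (1 - cos 1) \<ge> 16 * sqrt 2"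
    using sc s2 by (simp add: divide_le_eq_1 le_divide_eq)
  then have b16: "b \<ge> 16" unfolding b_def using s2 assms(7) by (smt (verit) divide_pos_pos)
  define K2 where "K2 = b / pi * ((4 + \<epsilon>) / \<epsilon>)"
  have "K2 \<ge> b" "K2 * \<epsilon> \<ge> b"
    unfolding K2_def using b16 assms(7,8) by (intro K_bound; simp)+
  then have K2a: "K2 \<ge> 16" "K2 * \<epsilon> \<ge> 16" using b16 by linarith+
  have K2eq: "1 / pi * (1 / \<epsilon> + 16 * sqrt 2 / sqrt (1 - cos 1)) * ((4 + \<epsilon>) / \<epsilon>) = K2"
    unfolding K2_def b_def by simp
  have P1: "\<bar>alpha E Q n 0\<bar> \<le> K0 * (1 / Nr) * r ^ (n - 1)"
  proof (cases "n = 0")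
    case True
    have "K0 * (1 / Nr) * r ^ (n - 1) \<ge> 0" using K0a Nr8 r1[of "n-1"] by simp
    then show ?thesis using True by simp
  next
    case False
    have "\<bar>alpha E Q n 0\<bar> \<le> 2 / Nr^2 * real n" using L.alpha0_bd[of n] qq by simp
    also have "\<dots> \<le> (2 * Nr + 2 * real (n - 1)) / Nr^2"
      using False Nr8 by (simp add: field_simps of_nat_diff)
    also have "\<dots> \<le> K0 * (1 / Nr) * r ^ (n - 1)"
      by (rule num_main[OF Nr8 assms(7) K0a(1) K0a(2)]) (auto intro: rb)
    finally show ?thesis .
  qed
  have P2: "\<bar>alpha E Q n 1\<bar> \<le> K1 * (1 / Nr) * r ^ (n - 1)"
  proof -
    have "\<bar>alpha E Q n 1\<bar> \<le> 1 / Nr" using L.alpha1_bd[of n] NN by auto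
    also have "1 / Nr = 1 * (1 / Nr) * 1" by simp
    also have "\<dots> \<le> K1 * (1 / Nr) * r ^ (n - 1)"
      using K1a r1[of "n - 1"] Nr8 by (intro mult_mono) auto
    finally show ?thesis .
  qed
  have P3: "\<bar>\<Sum>t. x ^ (t + 2) * alpha E Q n (t + 2)\<bar> \<le> K2 * (1 / Nr) * r ^ (n - 2)"
    if x: "x \<in> {-1..1}" for x
  proof (cases "n \<le> 1")
    case True
    have "(\<Sum>t. x ^ (t + 2) * alpha E Q n (t + 2)) = 0"
      using True by (simp add: alpha_zero)
    moreover have "K2 * (1 / Nr) * r ^ (n - 2) \<ge> 0" using K2a Nr8 r1[of "n-2"] by simp
    ultimately show ?thesis by simp
  next
    case False
    have "\<bar>\<Sum>t. x ^ (t + 2) * alpha E Q n (t + 2)\<bar> \<le> L.qq * n + 1 / L.NN"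
      using x by (intro L.tail_bd) auto
    also have "\<dots> = (Nr + 2 * real n) / Nr^2" using Nr8 by (simp add: qq NN field_simps power2_eq_square)
    also have "\<dots> \<le> (16 * Nr + 16 * real (n - 2)) / Nr^2"
      using False Nr8 by (intro divide_right_mono) (auto simp: of_nat_diff)
    also have "\<dots> \<le> K2 * (1 / Nr) * r ^ (n - 2)"
      by (rule num_main[OF Nr8 assms(7) K2a(1) K2a(2)]) (auto intro: rb)
    finally show ?thesis .
  qed
  show ?thesis
    using P1 P2 P3 unfolding K0_def K1_def K2eq[symmetric] r_def Nr_def by auto
qed


end
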